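(* Let $\phi$ be a uniformly convex norm on $\mathbf{R}^n$ of class $\mathcal{C}^2$ on $\mathbf{R}^n\setminus\{0\}$, let $K\subseteq\mathbf{R}^n$ be closed, $x\in\mathbf{R}^n\setminus K$, and suppose $\delta^\phi_K$ is pointwise twice differentiable at $x$. Then $\rho^\phi_K(x)>1$. In particular $\mathrm{Cut}^\phi(K)\subseteq\Sigma^\phi_2(K)$.
   Context: A norm $\phi$ is uniformly convex if there is $\gamma>0$ such that $x\mapsto\phi(x)-\gamma|x|$ is convex. For closed $K$: $\delta^\phi_K(x)=\inf\{\phi(y-x):y\in K\}$; $\xi^\phi_K(x)=K\cap\{w:\phi(x-w)=\delta^\phi_K(x)\}$; $\rho^\phi_K(x)=\sup\bigl(\mathbf{R}\cap\{s:\delta^\phi_K(a+s(x-a))=s\,\delta^\phi_K(x)\}\bigr)$ for any $a\in\xi^\phi_K(x)$; $N^\phi(K)=\{(a,\eta):a\in K,\ \phi(\eta)=1,\ \delta^\phi_K(a+s\eta)=s\text{ for some }s>0\}$; $r^\phi_K(a,\eta)=\sup\{s>0:\delta^\phi_K(a+s\eta)=s\}$; $\mathrm{Cut}^\phi(K)=\{a+r^\phi_K(a,\eta)\eta:(a,\eta)\in N^\phi(K),\ r^\phi_K(a,\eta)<\infty\}$. A function is pointwise twice differentiable at $x$ if there are an open $U\ni x$ in its domain and a polynomial $P$ of degree $\le2$ with $f(x)=P(x)$ and $|f(y)-P(y)|/|y-x|^2\to0$ as $y\to x$. $\Sigma^\phi_2(K)$ is the set of $x\in\mathbf{R}^n\setminus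 K$ where $\delta^\phi_K$ is not pointwise twice differentiable. *)

theory Defs
  imports "HOL-Analysis.Analysis"
begin

definition is_norm_fn :: "('a::euclidean_space \<Rightarrow> real) \<Rightarrow> bool" where
  "is_norm_fn \<phi> \<longleftrightarrow> (\<forall>x. \<phi> x \<ge> 0) \<and> (\<forall>x. \<phi> x = 0 \<longleftrightarrow> x = 0)
     \<and> (\<forall>x y. \<phi> (x + y) \<le> \<phi> x + \<phi> y) \<and> (\<forall>c x. \<phi> (c *\<^sub>R x) = \<bar>c\<bar> * \<phi> x)"

definition uniformly_convex_norm :: "('a::euclidean_space \<Rightarrow> real) \<Rightarrow> bool" where
  "uniformly_convex_norm \<phi> \<longleftrightarrow> (\<exists>\<gamma>>0. convex_on UNIV (\<lambda>x. \<phi> x - \<gamma> * norm x))"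

definition C2_off_origin :: "('a::euclidean_space \<Rightarrow> real) \<Rightarrow> bool" where
  "C2_off_origin \<phi> \<longleftrightarrow> (\<exists>(Df :: 'a \<Rightarrow> ('a \<Rightarrow>\<^sub>L real)) (D2 :: 'a \<Rightarrow> ('a \<Rightarrow>\<^sub>L ('a \<Rightarrow>\<^sub>L real))).
     (\<forall>x. x \<noteq> 0 \<longrightarrow> (\<phi> has_derivative blinfun_apply (Df x)) (at x)
                  \<and> (Df has_derivative blinfun_apply (D2 x)) (at x))
     \<and> continuous_on (UNIV - {0}) D2)"

definition dist_fn :: "('a::euclidean_space \<Rightarrow> real) \<Rightarrow> 'a set \<Rightarrow> 'a \<Rightarrow> real" where
  "dist_fn \<phi> K x = Inf {\<phi> (y - x) | y. y \<in> K}"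

definition xi_fn :: "('a::euclidean_space \<Rightarrow> real) \<Rightarrow> 'a set \<Rightarrow> 'a \<Rightarrow> 'a set" where
  "xi_fn \<phi> K x = K \<inter> {w. \<phi> (x - w) = dist_fn \<phi> K x}"

text \<open>Reach along the ray through a nearest point a (the paper notes independence of the choice of a).\<close>
definition rho_fn :: "('a::euclidean_space \<Rightarrow> real) \<Rightarrow> 'a set \<Rightarrow> 'a \<Rightarrow> ereal" where
  "rho_fn \<phi> K x = (let a = (SOME a. a \<in> xi_fn \<phi> K x) in
     Sup (ereal ` {s::real. dist_fn \<phi> K (a + s *\<^sub>R (x - a)) = s * dist_fn \<phi> K x}))"

definition normal_bundle :: "('a::euclidean_space \<Rightarrow> real) \<Rightarrow> 'a set \<Rightarrow> ('a \<times> 'a) set" where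
  "normal_bundle \<phi> K = {(a, \<eta>). a \<in> K \<and> \<phi> \<eta> = 1 \<and> (\<exists>s>0. dist_fn \<phi> K (a + s *\<^sub>R \<eta>) = s)}"

definition r_fn :: "('a::euclidean_space \<Rightarrow> real) \<Rightarrow> 'a set \<Rightarrow> 'a \<Rightarrow> 'a \<Rightarrow> ereal" where
  "r_fn \<phi> K a \<eta> = Sup (ereal ` {s::real. s > 0 \<and> dist_fn \<phi> K (a + s *\<^sub>R \<eta>) = s})"

definition cut_locus :: "('a::euclidean_space \<Rightarrow> real) \<Rightarrow> 'a set \<Rightarrow> 'a set" where
  "cut_locus \<phi> K = {a + real_of_ereal (r_fn \<phi> K a \<eta>) *\<^sub>R \<eta> | a \<eta>.
      (a, \<eta>) \<in> normal_bundle \<phi> K \<and> r_fn \<phi> K a \<eta> < \<infinity>}"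

text \<open>Pointwise twice differentiability of a function defined on all of the space
  (the open neighbourhood U can be taken to be the whole space); the polynomial of
  degree at most 2 is written as constant + linear + bilinear part centred at x.\<close>
definition ptwise_twice_diff :: "('a::euclidean_space \<Rightarrow> real) \<Rightarrow> 'a \<Rightarrow> bool" where
  "ptwise_twice_diff f x \<longleftrightarrow> (\<exists>(c::real) (L::'a \<Rightarrow> real) (Q::'a \<Rightarrow> 'a \<Rightarrow> real).
     linear L \<and> bilinear Q \<and> f x = c \<and>
     ((\<lambda>y. \<bar>f y - (c + L (y - x) + Q (y - x) (y - x))\<bar> / (norm (y - x))\<^sup>2) \<longlongrightarrow> 0) (at x))"

definition Sigma2 :: "('a::euclidean_space \<Rightarrow> real) \<Rightarrow> 'a set \<Rightarrow> 'a set" where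
  "Sigma2 \<phi> K = {x. x \<notin> K \<and> \<not> ptwise_twice_diff (dist_fn \<phi> K) x}"

end

theory Submission
  imports Defs
begin

lemma nf_neg: "is_norm_fn \<phi> \<Longrightarrow> \<phi> (- z) = \<phi> z"
  unfolding is_norm_fn_def by (metis abs_minus_cancel abs_one mult_1 scaleR_minus1_left)

lemma nf_scale: "is_norm_fn \<phi> \<Longrightarrow> c \<ge> 0 \<Longrightarrow> \<phi> (c *\<^sub>R z) = c * \<phi> z"
  unfolding is_norm_fn_def by simp

lemma nf_tri: "is_norm_fn \<phi> \<Longrightarrow> \<phi> (x + y) \<le> \<phi> x + \<phi> y"
  unfolding is_norm_fn_def by blast

lemma nf_nonneg: "is_norm_fn \<phi> \<Longrightarrow> \<phi> x \<ge> 0"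
  unfolding is_norm_fn_def by blast

lemma nf_zero: "is_norm_fn \<phi> \<Longrightarrow> \<phi> 0 = 0"
  unfolding is_norm_fn_def by blast

lemma nf_sym: "is_norm_fn \<phi> \<Longrightarrow> \<phi> (x - y) = \<phi> (y - x)"
  by (metis minus_diff_eq nf_neg)

lemma nf_lower:
  assumes "is_norm_fn \<phi>" "convex_on UNIV (\<lambda>x. \<phi> x - \<gamma> * norm x)"
  shows "\<gamma> * norm z \<le> \<phi> z"
proof -
  have "(\<lambda>x. \<phi> x - \<gamma> * norm x) ((1 - 1/2) *\<^sub>R z + (1/2) *\<^sub>R (-z))
     \<le> (1 - 1/2) * (\<phi> z - \<gamma> * norm z) + (1/2) * (\<phi> (-z) - \<gamma> * norm (-z))"
    by (rule convex_onD[OF assms(2)]) auto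
  then show ?thesis using nf_neg[OF assms(1)] nf_zero[OF assms(1)] by simp
qed

lemma dist_le: "b \<in> K \<Longrightarrow> is_norm_fn \<phi> \<Longrightarrow> dist_fn \<phi> K y \<le> \<phi> (b - y)"
  unfolding dist_fn_def
  by (rule cInf_lower) (auto intro!: bdd_belowI[where m=0] simp: nf_nonneg)

lemma dist_ge: "K \<noteq> {} \<Longrightarrow> (\<And>b. b \<in> K \<Longrightarrow> m \<le> \<phi> (b - y)) \<Longrightarrow> m \<le> dist_fn \<phi> K y"
  unfolding dist_fn_def by (rule cInf_greatest) auto

lemma dist_lip:
  assumes "is_norm_fn \<phi>" "K \<noteq> {}"
  shows "dist_fn \<phi> K y \<le> dist_fn \<phi> K y' + \<phi> (y' - y)"
proof -
  have "dist_fn \<phi> K y - \<phi> (y' - y) \<le> dist_fn \<phi> K y'"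
  proof (rule dist_ge[OF assms(2)])
    fix b assume b: "b \<in> K"
    have "dist_fn \<phi> K y \<le> \<phi> (b - y)" by (rule dist_le[OF b assms(1)])
    also have "\<dots> \<le> \<phi> (b - y') + \<phi> (y' - y)"
      using nf_tri[OF assms(1), of "b - y'" "y' - y"] by simp
    finally show "dist_fn \<phi> K y - \<phi> (y' - y) \<le> \<phi> (b - y')" by simp
  qed
  then show ?thesis by simp
qed

lemma dist_nonneg: "K \<noteq> {} \<Longrightarrow> is_norm_fn \<phi> \<Longrightarrow> 0 \<le> dist_fn \<phi> K y"
  by (rule dist_ge) (auto simp: nf_nonneg)

lemma norm_step_bound:
  fixes v s :: "'a::euclidean_space"
  assumes "v \<noteq> 0" "0 \<le> lam" "lam * norm s \<le> norm v"
  shows "norm (v + lam *\<^sub>R s) \<le> norm v + lam * ((v \<bullet> s) / norm v) + lam^2 * (norm s)^2 / (2 * norm v)"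
proof -
  define l where "l = norm v"
  define w where "w = (v \<bullet> s) / norm v"
  define n where "n = norm s"
  have lpos: "l > 0" using assms(1) by (simp add: l_def)
  have vs: "v \<bullet> s = l * w" using lpos by (simp add: w_def l_def)
  have "\<bar>v \<bullet> s\<bar> \<le> l * n" unfolding l_def n_def by (rule Cauchy_Schwarz_ineq2)
  hence wn: "\<bar>w\<bar> \<le> n" using vs lpos by (simp add: abs_mult) 
  have R0: "0 \<le> l + lam * w + lam^2 * n^2 / (2 * l)"
  proof -
    have "lam * \<bar>w\<bar> \<le> lam * n" using wn assms(2) by (simp add: mult_left_mono)
    moreover have "- (lam * w) \<le> lam * \<bar>w\<bar>" using assms(2)
      by (metis abs_ge_minus_self minus_mult_right mult_left_mono)
    ultimately have "- (lam * w) \<le> l" using assms(3) unfolding l_def n_def by linarith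
    moreover have "0 \<le> lam^2 * n^2 / (2 * l)" using lpos by simp
    ultimately show ?thesis by linarith
  qed
  have sq: "(norm (v + lam *\<^sub>R s))^2 = l^2 + 2 * lam * (l * w) + lam^2 * n^2"
  proof -
    have "(norm (v + lam *\<^sub>R s))^2 = (norm v)^2 + 2 * lam * (v \<bullet> s) + lam^2 * (norm s)^2"
      unfolding power2_norm_eq_inner
      by (simp add: inner_add inner_commute algebra_simps power2_eq_square)
    thus ?thesis using vs by (simp add: l_def n_def)
  qed
  have "(l + lam * w + lam^2 * n^2 / (2 * l))^2 = l^2 + 2 * lam * (l * w) + lam^2 * n^2 + (lam * w + lam^2 * n^2 / (2 * l))^2"
    using lpos by (simp add: power2_eq_square algebra_simps add_divide_distrib)
  hence "(norm (v + lam *\<^sub>R s))^2 \<le> (l + lam * w + lam^2 * n^2 / (2 * l))^2"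
    using sq by simp
  hence "norm (v + lam *\<^sub>R s) \<le> l + lam * w + lam^2 * n^2 / (2 * l)"
    using R0 by (rule power2_le_imp_le)
  thus ?thesis by (simp add: l_def w_def n_def)
qed

lemma subgrad:
  fixes v :: "'a::euclidean_space"
  assumes cvx: "convex_on UNIV (\<lambda>x. \<phi> x - \<gamma> * norm x)" and g0: "0 \<le> \<gamma>"
    and v0: "v \<noteq> 0" and r0: "r > 0" and M0: "M \<ge> 0" and lin: "linear L"
    and low: "\<And>h. norm h < r \<Longrightarrow> \<phi> v + L h - M * (norm h)^2 \<le> \<phi> (v + h)"
  shows "\<phi> v - \<gamma> * norm v + L s - \<gamma> * ((v \<bullet> s) / norm v) \<le> \<phi> (v + s) - \<gamma> * norm (v + s)"
proof (cases "s = 0")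
  case True thus ?thesis using lin by (simp add: linear_0)
next
  case False
  define l where "l = norm v"
  define w where "w = (v \<bullet> s) / norm v"
  define n where "n = norm s"
  define C where "C = M * n^2 + \<gamma> * n^2 / (2 * l)"
  define T where "T = \<phi> v - \<gamma> * l + L s - \<gamma> * w"
  define P where "P = \<phi> (v + s) - \<gamma> * norm (v + s)"
  have lpos: "l > 0" using v0 by (simp add: l_def)
  have npos: "n > 0" using False by (simp add: n_def)
  have C0: "C \<ge> 0" using M0 g0 lpos by (simp add: C_def)
  have key: "T - lam * C \<le> P" if l0: "0 < lam" "lam < 1" "lam * n < r" "lam * n \<le> l" for lam
  proof -
    have nb: "norm (v + lam *\<^sub>R s) \<le> l + lam * w + lam^2 * n^2 / (2 * l)"
      using norm_step_bound[OF v0, of lam s] l0 by (simp add: l_def w_def n_def)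
    have "\<phi> v + L (lam *\<^sub>R s) - M * (norm (lam *\<^sub>R s))^2 \<le> \<phi> (v + lam *\<^sub>R s)"
      using low[of "lam *\<^sub>R s"] l0 by (simp add: n_def)
    hence ph: "\<phi> v + lam * L s - M * lam^2 * n^2 \<le> \<phi> (v + lam *\<^sub>R s)"
      using l0 lin by (simp add: linear_scale n_def power_mult_distrib)
    have "(\<lambda>x. \<phi> x - \<gamma> * norm x) ((1 - lam) *\<^sub>R v + lam *\<^sub>R (v + s))
        \<le> (1 - lam) * (\<phi> v - \<gamma> * norm v) + lam * (\<phi> (v + s) - \<gamma> * norm (v + s))"
      by (rule convex_onD[OF cvx]) (use l0 in auto)
    moreover have "(1 - lam) *\<^sub>R v + lam *\<^sub>R (v + s) = v + lam *\<^sub>R s"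
      by (simp add: algebra_simps)
    ultimately have cv: "\<phi> (v + lam *\<^sub>R s) - \<gamma> * norm (v + lam *\<^sub>R s) \<le> (1 - lam) * (\<phi> v - \<gamma> * l) + lam * P"
      by (simp add: P_def l_def)
    have "\<gamma> * norm (v + lam *\<^sub>R s) \<le> \<gamma> * (l + lam * w + lam^2 * n^2 / (2 * l))"
      using nb g0 by (simp add: mult_left_mono)
    hence "lam * (T - lam * C) \<le> lam * P"
      using cv ph unfolding T_def C_def by (simp add: algebra_simps power2_eq_square)
    thus ?thesis using l0 by simp
  qed
  show ?thesis
  proof (rule ccontr)
    assume "\<not> ?thesis"
    hence gp: "P < T" by (simp add: P_def T_def l_def w_def)
    define lam where "lam = min (1/2) (min (r / (2 * n)) (min (l / n) ((T - P) / (2 * C + 1))))"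
    have lp: "0 < lam" using gp npos lpos r0 C0 by (simp add: lam_def)
    have "lam \<le> r / (2 * n)" by (simp add: lam_def)
    hence a1: "lam * n < r" using npos r0 by (simp add: field_simps)
    have "lam \<le> l / n" by (simp add: lam_def)
    hence a2: "lam * n \<le> l" using npos by (simp add: field_simps)
    have a3: "lam < 1" by (simp add: lam_def)
    have "lam \<le> (T - P) / (2 * C + 1)" by (simp add: lam_def)
    hence "lam * (2 * C + 1) \<le> T - P" using C0 by (simp add: field_simps)
    moreover have "lam * C < lam * (2 * C + 1)" using lp C0 by (intro mult_strict_left_mono) auto
    ultimately have "lam * C < T - P" by linarith
    with key[OF lp a3 a1 a2] show False by linarith
  qed
qed

lemma ebound:
  fixes v s :: "'a::euclidean_space"
  assumes "v \<noteq> 0"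
  shows "(norm s)^2 - ((v \<bullet> s) / norm v)^2 \<le> (norm (v + s) - norm v - (v \<bullet> s) / norm v) * (2 * norm v + 2 * norm s)"
    and "norm v + (v \<bullet> s) / norm v \<le> norm (v + s)"
proof -
  define l where "l = norm v"
  define w where "w = (v \<bullet> s) / norm v"
  define n where "n = norm s"
  define N where "N = norm (v + s)"
  have lpos: "l > 0" using assms by (simp add: l_def)
  have vs: "v \<bullet> s = l * w" using lpos by (simp add: w_def l_def)
  have "\<bar>v \<bullet> s\<bar> \<le> l * n" unfolding l_def n_def by (rule Cauchy_Schwarz_ineq2)
  hence wn: "\<bar>w\<bar> \<le> n" using vs lpos by (simp add: abs_mult)
  have w2: "w^2 \<le> n^2" using wn by (metis abs_le_square_iff abs_of_nonneg norm_ge_zero n_def)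
  have N2: "N^2 = l^2 + 2 * l * w + n^2"
  proof -
    have "N^2 = (norm v)^2 + 2 * (v \<bullet> s) + (norm s)^2"
      unfolding N_def power2_norm_eq_inner
      by (simp add: inner_add inner_commute algebra_simps power2_eq_square)
    thus ?thesis using vs by (simp add: l_def n_def)
  qed
  have N0: "N \<ge> 0" by (simp add: N_def)
  have Nle: "N \<le> l + n" unfolding N_def l_def n_def by (rule norm_triangle_ineq)
  have "(l + w)^2 \<le> N^2" using N2 w2 by (simp add: power2_eq_square algebra_simps)
  hence Nge: "l + w \<le> N" using N0 by (metis abs_le_square_iff abs_of_nonneg abs_ge_self order_trans)
  have "n^2 - w^2 = (N - l - w) * (N + l + w)" using N2 by (simp add: power2_eq_square algebra_simps)
  also have "\<dots> \<le> (N - l - w) * (2 * l + 2 * n)"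
    using Nge Nle wn by (intro mult_left_mono) auto
  finally show "(norm s)^2 - ((v \<bullet> s) / norm v)^2 \<le> (norm (v + s) - norm v - (v \<bullet> s) / norm v) * (2 * norm v + 2 * norm s)"
    by (simp add: l_def w_def n_def N_def)
  show "norm v + (v \<bullet> s) / norm v \<le> norm (v + s)" using Nge by (simp add: l_def w_def N_def)
qed

lemma perp_decomp:
  fixes v s :: "'a::euclidean_space"
  assumes "v \<noteq> 0" "linear L"
  defines "w \<equiv> (v \<bullet> s) / norm v"
  defines "sp \<equiv> s - (w / norm v) *\<^sub>R v"
  shows "(norm sp)^2 = (norm s)^2 - w^2" and "L s = (w / norm v) * L v + L sp"
proof -
  have lpos: "norm v > 0" using assms by simp
  have vv: "v \<bullet> v = (norm v)^2" by (simp add: power2_norm_eq_inner)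
  have "(norm sp)^2 = sp \<bullet> sp" by (simp add: power2_norm_eq_inner)
  also have "\<dots> = s \<bullet> s - 2 * (w / norm v) * (v \<bullet> s) + (w / norm v)^2 * (v \<bullet> v)"
    unfolding sp_def by (simp add: inner_diff inner_commute algebra_simps power2_eq_square)
  also have "\<dots> = (norm s)^2 - w^2"
    using lpos unfolding vv w_def by (simp add: power2_norm_eq_inner[symmetric] power2_eq_square field_simps)
  finally show "(norm sp)^2 = (norm s)^2 - w^2" .
  have "s = (w / norm v) *\<^sub>R v + sp" by (simp add: sp_def)
  hence "L s = L ((w / norm v) *\<^sub>R v + sp)" by simp
  thus "L s = (w / norm v) * L v + L sp" using assms(2) by (simp add: linear_add linear_scale)
qed

lemma sq_sum_le: "((a::real) + b)^2 \<le> 2 * a^2 + 2 * b^2"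
proof -
  have "(a + b)^2 + (a - b)^2 = 2 * a^2 + 2 * b^2" by (simp add: power2_eq_square algebra_simps)
  moreover have "(a - b)^2 \<ge> 0" by simp
  ultimately show ?thesis by linarith
qed

lemma core:
  fixes \<phi> :: "'a::euclidean_space \<Rightarrow> real"
  assumes nf: "is_norm_fn \<phi>" and g0: "\<gamma> > 0" and cvx: "convex_on UNIV (\<lambda>x. \<phi> x - \<gamma> * norm x)"
    and Kne: "K \<noteq> {}" and aK: "a \<in> K" and ad: "\<phi> (x - a) = dist_fn \<phi> K x"
    and dpos: "dist_fn \<phi> K x > 0" and ptw: "ptwise_twice_diff (dist_fn \<phi> K) x"
  shows "\<exists>t>0. dist_fn \<phi> K (a + (1 + t) *\<^sub>R (x - a)) = (1 + t) * dist_fn \<phi> K x"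
proof -
  define D where "D = dist_fn \<phi> K"
  define d where "d = D x"
  define v where "v = x - a"
  define l where "l = norm v"
  have d0: "d > 0" using dpos by (simp add: d_def D_def)
  have phv: "\<phi> v = d" using ad by (simp add: v_def d_def D_def)
  have v0: "v \<noteq> 0" using phv d0 nf_zero[OF nf] by auto
  have l0: "l > 0" using v0 by (simp add: l_def)
  obtain c L Q where lin: "linear L" and bil: "bilinear Q" and cd: "D x = c"
    and lim: "((\<lambda>y. \<bar>D y - (c + L (y - x) + Q (y - x) (y - x))\<bar> / (norm (y - x))\<^sup>2) \<longlongrightarrow> 0) (at x)"
    using ptw unfolding ptwise_twice_diff_def D_def by blast
  have "\<forall>\<^sub>F y in at x. dist (\<bar>D y - (c + L (y - x) + Q (y - x) (y - x))\<bar> / (norm (y - x))\<^sup>2) 0 < 1"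
    by (rule tendstoD[OF lim]) simp
  then obtain r where r0: "r > 0" and rr: "\<And>y. y \<noteq> x \<Longrightarrow> dist y x < r \<Longrightarrow>
      dist (\<bar>D y - (c + L (y - x) + Q (y - x) (y - x))\<bar> / (norm (y - x))\<^sup>2) 0 < 1"
    unfolding eventually_at by auto
  obtain KQ where KQ0: "KQ \<ge> 0" and KQ: "\<And>u w. norm (Q u w) \<le> norm u * norm w * KQ"
    using bounded_bilinear.nonneg_bounded[of Q] bil bilinear_conv_bounded_bilinear by blast
  obtain KL where KL0: "KL \<ge> 0" and KL: "\<And>u. norm (L u) \<le> norm u * KL"
    using bounded_linear.nonneg_bounded[of L] lin linear_conv_bounded_linear by blast
  define M where "M = KQ + 1"
  have M0: "M > 0" using KQ0 by (simp add: M_def)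
  have lowD: "d + L h - M * (norm h)^2 \<le> D (x + h)" if hr: "norm h < r" for h
  proof (cases "h = 0")
    case True thus ?thesis using lin M0 by (simp add: linear_0 d_def)
  next
    case False
    have "dist (\<bar>D (x + h) - (c + L h + Q h h)\<bar> / (norm h)\<^sup>2) 0 < 1"
      using rr[of "x + h"] False hr by (simp add: dist_norm)
    hence "\<bar>D (x + h) - (c + L h + Q h h)\<bar> < (norm h)^2" using False by (simp add: field_simps)
    moreover have "\<bar>Q h h\<bar> \<le> norm h * norm h * KQ" using KQ[of h h] by simp
    ultimately show ?thesis using cd unfolding d_def M_def by (simp add: power2_eq_square algebra_simps abs_le_iff abs_less_iff)
  qed
  have upD: "D y \<le> \<phi> (y - a)" for y
    using dist_le[OF aK nf, of y] nf_sym[OF nf, of a y] by (simp add: D_def)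
  have low: "\<phi> v + L h - M * (norm h)^2 \<le> \<phi> (v + h)" if "norm h < r" for h
    using lowD[OF that] upD[of "x + h"] phv by (simp add: v_def algebra_simps)
  have sub: "\<phi> v - \<gamma> * norm v + L s - \<gamma> * ((v \<bullet> s) / norm v) \<le> \<phi> (v + s) - \<gamma> * norm (v + s)" for s
    by (rule subgrad[OF cvx _ v0 r0 _ lin low]) (use g0 M0 in auto)
  have Lv: "L v = d"
  proof -
    have "\<phi> v - \<gamma> * norm v + L v - \<gamma> * ((v \<bullet> v) / norm v) \<le> \<phi> (v + v) - \<gamma> * norm (v + v)"
      by (rule sub)
    moreover have "v + v = 2 *\<^sub>R v" by (simp add: scaleR_2)
    moreover have "(v \<bullet> v) / norm v = norm v" using v0 by (simp add: power2_norm_eq_inner[symmetric] power2_eq_square)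
    ultimately have 1: "L v \<le> d" using nf_scale[OF nf, of 2 v] phv by simp
    have e1: "v + (-(1/2) *\<^sub>R v) = (1/2) *\<^sub>R v"
    proof -
      have "(1 + (-(1/2::real))) *\<^sub>R v = v + (-(1/2)) *\<^sub>R v" by (simp only: scaleR_add_left scaleR_one)
      moreover have "(1 + (-(1/2::real))) = 1/2" by simp
      ultimately show ?thesis by simp
    qed
    have e2: "(v \<bullet> (-(1/2) *\<^sub>R v)) / norm v = -(1/2) * norm v"
      using v0 by (simp add: power2_norm_eq_inner[symmetric] power2_eq_square)
    have e3: "L (-(1/2) *\<^sub>R v) = -(1/2) * L v" using linear_scale[OF lin, of "-(1/2)" v] by simp
    have e4: "\<phi> ((1/2) *\<^sub>R v) = (1/2) * d" using nf_scale[OF nf, of "1/2" v] phv by simp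
    have e5: "norm ((1/2::real) *\<^sub>R v) = (1/2) * norm v" by simp
    have "\<phi> v - \<gamma> * norm v + L (-(1/2) *\<^sub>R v) - \<gamma> * ((v \<bullet> (-(1/2) *\<^sub>R v)) / norm v)
        \<le> \<phi> (v + (-(1/2) *\<^sub>R v)) - \<gamma> * norm (v + (-(1/2) *\<^sub>R v))"
      by (rule sub)
    hence "d - \<gamma> * norm v + (-(1/2) * L v) - \<gamma> * (-(1/2) * norm v) \<le> (1/2) * d - \<gamma> * ((1/2) * norm v)"
      unfolding e1 e2 e3 e4 e5 phv .
    hence "d \<le> L v" by simp
    with 1 show ?thesis by simp
  qed
  define B where "B = l + d / \<gamma>"
  define A where "A = M * (2 * l + 2 * B) / \<gamma>"
  define Z where "Z = 2 * (l / d)^2 * (M^2 * B^2 + KL^2 * A) + A"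
  have B0: "B > 0" using l0 d0 g0 unfolding B_def by (simp add: add_pos_pos)
  have A0: "A \<ge> 0" using M0 l0 B0 g0 by (simp add: A_def)
  have Z0: "Z \<ge> 0" using A0 by (simp add: Z_def)
  define t where "t = min (1/2) (min (1 / (2 * Z + 2)) (r / (2 * B + 2)))"
  have t0: "t > 0" using Z0 B0 r0 by (simp add: t_def)
  have t1: "t \<le> 1/2" unfolding t_def by (rule min.cobounded1)
  have "t \<le> 1 / (2 * Z + 2)" by (simp add: t_def)
  hence "t * (2 * Z + 2) \<le> 1" using Z0 by (simp add: field_simps)
  moreover have "t * (2 * Z + 2) = 2 * (t * Z) + 2 * t" by (simp add: algebra_simps)
  ultimately have tZ: "t * Z < 1" using t0 by linarith
  have "t \<le> r / (2 * B + 2)" by (simp add: t_def)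
  hence "t * (2 * B + 2) \<le> r" using B0 by (simp add: field_simps)
  moreover have "t * (2 * B + 2) = 2 * (t * B) + 2 * t" by (simp add: algebra_simps)
  moreover have "t * B > 0" using t0 B0 by simp
  ultimately have tB: "t * B < r" using t0 by linarith
  define y where "y = a + (1 + t) *\<^sub>R v"
  have main: "(1 + t) * d \<le> \<phi> (p - y)" if pK: "p \<in> K" for p
  proof (rule ccontr)
    assume "\<not> ?thesis"
    hence bad: "\<phi> (p - y) < (1 + t) * d" by simp
    define s where "s = (1 / (1 + t)) *\<^sub>R (a - p)"
    define n where "n = norm s"
    define w where "w = (v \<bullet> s) / norm v"
    define sp where "sp = s - (w / norm v) *\<^sub>R v"
    define N where "N = norm (v + s)"
    have yp: "y - p = (1 + t) *\<^sub>R (v + s)" using t0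
      by (simp add: y_def s_def algebra_simps)
    have "\<phi> (p - y) = (1 + t) * \<phi> (v + s)"
      using nf_sym[OF nf, of p y] yp nf_scale[OF nf, of "1 + t" "v + s"] t0 by simp
    hence phs: "\<phi> (v + s) < d" using bad t0 by simp
    have s0: "s \<noteq> 0" using phs phv by auto
    have n0: "n > 0" using s0 by (simp add: n_def)
    have "norm (a - p) \<le> norm (a - y) + norm (y - p)" using norm_triangle_ineq[of "a - y" "y - p"] by simp
    moreover have "norm (a - y) = (1 + t) * l" using t0 by (simp add: y_def l_def)
    moreover have "\<gamma> * norm (y - p) \<le> \<phi> (y - p)" by (rule nf_lower[OF nf cvx])
    moreover have "\<phi> (y - p) < (1 + t) * d" using bad nf_sym[OF nf, of p y] by simp
    moreover have "\<gamma> * norm (a - p) \<le> \<gamma> * (norm (a - y) + norm (y - p))"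
      using calculation(1) g0 by (intro mult_left_mono) auto
    ultimately have "\<gamma> * norm (a - p) < \<gamma> * ((1 + t) * l) + (1 + t) * d"
      by (simp add: algebra_simps)
    hence "norm (a - p) < (1 + t) * B" using g0 unfolding B_def by (simp add: field_simps)
    moreover have "n = norm (a - p) / (1 + t)" using t0 by (simp add: n_def s_def)
    moreover have "n * (1 + t) = norm (a - p)" using t0 by (simp add: n_def s_def)
    ultimately have "n * (1 + t) < B * (1 + t)" by (simp add: mult.commute)
    hence nB: "n < B" using t0 by (meson mult_right_less_imp_less less_imp_le add_pos_pos zero_less_one)
    have s1: "(1 + t) *\<^sub>R s = a - p" using t0 by (simp add: s_def)
    have "x - t *\<^sub>R s - p = v + ((1 + t) *\<^sub>R s - t *\<^sub>R s)"
      unfolding s1 by (simp add: v_def algebra_simps)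
    moreover have "(1 + t) *\<^sub>R s - t *\<^sub>R s = s" by (simp add: algebra_simps)
    ultimately have xts: "x - t *\<^sub>R s - p = v + s" by simp
    have "D (x - t *\<^sub>R s) \<le> \<phi> (p - (x - t *\<^sub>R s))"
      using dist_le[OF pK nf] by (simp add: D_def)
    also have "\<dots> = \<phi> (v + s)" using nf_sym[OF nf, of p "x - t *\<^sub>R s"] xts by simp
    finally have Dlt: "D (x - t *\<^sub>R s) < d" using phs by simp
    have "norm (- (t *\<^sub>R s)) = t * n" using t0 by (simp add: n_def)
    moreover have "t * n < t * B" using nB t0 by simp
    ultimately have "norm (- (t *\<^sub>R s)) < r" using tB by simp
    from lowD[OF this] have "d + L (- (t *\<^sub>R s)) - M * (t * n)^2 \<le> D (x - t *\<^sub>R s)"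
      using t0 by (simp add: n_def)
    hence "d - t * L s - M * (t * n)^2 < d" using Dlt lin by (simp add: linear_neg linear_scale)
    hence "t * (- L s) < t * (M * t * n^2)" by (simp add: power2_eq_square algebra_simps)
    hence Ls1: "- L s < M * t * n^2" using t0 by (meson mult_left_less_imp_less less_imp_le)
    have "\<phi> v - \<gamma> * norm v + L s - \<gamma> * w \<le> \<phi> (v + s) - \<gamma> * N"
      using sub[of s] by (simp add: w_def N_def)
    hence Ls2: "\<gamma> * (N - l - w) < - L s" using phs phv by (simp add: l_def algebra_simps)
    have eb: "n^2 - w^2 \<le> (N - l - w) * (2 * l + 2 * n)"
      using ebound(1)[OF v0, of s] by (simp add: n_def w_def N_def l_def)
    have Nlw: "0 \<le> N - l - w" using ebound(2)[OF v0, of s] by (simp add: n_def w_def N_def l_def)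
    have "\<gamma> * (n^2 - w^2) \<le> \<gamma> * ((N - l - w) * (2 * l + 2 * n))"
      using eb g0 by (simp add: mult_left_mono)
    also have "\<dots> = (\<gamma> * (N - l - w)) * (2 * l + 2 * n)" by simp
    also have "\<dots> \<le> (M * t * n^2) * (2 * l + 2 * n)"
      using Ls1 Ls2 l0 n0 by (intro mult_right_mono) auto
    also have "\<dots> \<le> (M * t * n^2) * (2 * l + 2 * B)"
      using nB M0 t0 by (intro mult_left_mono) auto
    also have "(M * t * n^2) * (2 * l + 2 * B) = \<gamma> * (A * t * n^2)"
      using g0 unfolding A_def by (simp add: field_simps)
    finally have "\<gamma> * (n^2 - w^2) \<le> \<gamma> * (A * t * n^2)" .
    hence sp2: "n^2 - w^2 \<le> A * t * n^2" using g0 by simp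
    have spn: "(norm sp)^2 = n^2 - w^2" and Lsd: "L s = (w / norm v) * L v + L sp"
      using perp_decomp[OF v0 lin, of s] by (simp_all add: sp_def w_def n_def)
    have "0 \<le> \<gamma> * (N - l - w)" using Nlw g0 by simp
    hence absLs: "\<bar>L s\<bar> < M * t * n^2" using Ls1 Ls2 by linarith
    have "\<bar>L sp\<bar> \<le> KL * norm sp" using KL[of sp] by (simp add: mult.commute)
    define X where "X = M * t * n^2 + KL * norm sp"
    have "w / l * d = L s - L sp" using Lsd Lv by (simp add: l_def)
    hence "\<bar>w / l * d\<bar> \<le> \<bar>L s\<bar> + \<bar>L sp\<bar>" by (simp add: abs_triangle_ineq4)
    hence "\<bar>w / l * d\<bar> \<le> X"
      using absLs \<open>\<bar>L sp\<bar> \<le> KL * norm sp\<close> unfolding X_def by linarith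
    hence "\<bar>w\<bar> * (d / l) \<le> X" using d0 l0 by (simp add: abs_mult)
    hence "\<bar>w\<bar> \<le> (l / d) * X" using d0 l0 by (simp add: field_simps)
    hence "\<bar>w\<bar>^2 \<le> ((l / d) * X)^2" by (rule power_mono) simp
    moreover have "((l / d) * X)^2 = (l / d)^2 * X^2" by (rule power_mult_distrib)
    ultimately have w2: "w^2 \<le> (l / d)^2 * X^2" by simp
    have "X^2 \<le> 2 * (M * t * n^2)^2 + 2 * (KL * norm sp)^2"
      unfolding X_def by (rule sq_sum_le)
    also have "(M * t * n^2)^2 \<le> M^2 * B^2 * t * n^2"
    proof -
      have "(M * t * n^2)^2 = M^2 * (t^2 * n^2) * n^2" by (simp add: power2_eq_square)
      also have "\<dots> \<le> M^2 * (t * B^2) * n^2"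
        using t0 t1 n0 nB by (intro mult_right_mono mult_left_mono mult_mono power_mono) (auto simp: power2_eq_square)
      finally show ?thesis by (simp add: algebra_simps)
    qed
    also have "(KL * norm sp)^2 \<le> KL^2 * (A * t * n^2)"
      using spn sp2 by (simp add: power_mult_distrib mult_left_mono)
    finally have "X^2 \<le> 2 * (M^2 * B^2 + KL^2 * A) * t * n^2" by (simp add: algebra_simps)
    hence "(l / d)^2 * X^2 \<le> (l / d)^2 * (2 * (M^2 * B^2 + KL^2 * A) * t * n^2)"
      by (simp add: mult_left_mono)
    with w2 have "w^2 \<le> 2 * (l / d)^2 * (M^2 * B^2 + KL^2 * A) * t * n^2" by (simp add: algebra_simps)
    with sp2 have "n^2 \<le> (t * Z) * n^2" by (simp add: Z_def algebra_simps)
    moreover have "(t * Z) * n^2 < 1 * n^2" using tZ n0 by (intro mult_strict_right_mono) auto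
    ultimately show False by simp
  qed
  have "(1 + t) * d \<le> D y" unfolding D_def by (rule dist_ge[OF Kne], rule main)
  moreover have "D y \<le> (1 + t) * d"
  proof -
    have "D y \<le> \<phi> (a - y)" using dist_le[OF aK nf] by (simp add: D_def)
    also have "a - y = - ((1 + t) *\<^sub>R v)" by (simp add: y_def)
    finally show ?thesis using nf_neg[OF nf] nf_scale[OF nf, of "1 + t" v] phv t0 by simp
  qed
  ultimately have "D y = (1 + t) * d" by simp
  thus ?thesis using t0 by (intro exI[of _ t]) (simp add: D_def d_def y_def v_def)
qed

lemma nf_cont:
  assumes "is_norm_fn \<phi>" "convex_on UNIV (\<lambda>x. \<phi> x - \<gamma> * norm x)"
  shows "continuous_on UNIV \<phi>"
proof -
  have "continuous_on UNIV (\<lambda>x. \<phi> x - \<gamma> * norm x)"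
    by (rule convex_on_continuous[OF open_UNIV assms(2)])
  moreover have "continuous_on UNIV (\<lambda>x. \<gamma> * norm x)" by (intro continuous_intros)
  ultimately have "continuous_on UNIV (\<lambda>x. (\<phi> x - \<gamma> * norm x) + \<gamma> * norm x)"
    by (rule continuous_on_add)
  thus ?thesis by simp
qed

lemma nearest:
  fixes \<phi> :: "'a::euclidean_space \<Rightarrow> real"
  assumes nf: "is_norm_fn \<phi>" and g0: "\<gamma> > 0" and cvx: "convex_on UNIV (\<lambda>x. \<phi> x - \<gamma> * norm x)"
    and cK: "closed K" and Kne: "K \<noteq> {}"
  shows "\<exists>a\<in>K. \<phi> (x - a) = dist_fn \<phi> K x"
proof -
  define d where "d = dist_fn \<phi> K x"
  obtain b0 where b0K: "b0 \<in> K" and b0: "\<phi> (b0 - x) < d + 1"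
  proof -
    have "\<exists>b\<in>K. \<phi> (b - x) < d + 1"
    proof (rule ccontr)
      assume "\<not> ?thesis"
      hence "d + 1 \<le> dist_fn \<phi> K x" by (intro dist_ge[OF Kne]) auto
      thus False by (simp add: d_def)
    qed
    thus ?thesis using that by blast
  qed
  define R0 where "R0 = (d + 1) / \<gamma>"
  define S where "S = K \<inter> cball x R0"
  have cS: "compact S" unfolding S_def by (rule closed_Int_compact[OF cK compact_cball])
  have "\<gamma> * norm (b0 - x) < d + 1" using nf_lower[OF nf cvx, of "b0 - x"] b0 by simp
  hence "norm (b0 - x) < R0" using g0 by (simp add: R0_def field_simps)
  hence b0S: "b0 \<in> S" using b0K by (simp add: S_def dist_norm norm_minus_commute)
  have ct: "continuous_on S (\<lambda>b. \<phi> (b - x))"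
    by (rule continuous_on_compose2[OF nf_cont[OF nf cvx]]) (auto intro!: continuous_intros)
  obtain a where aS: "a \<in> S" and amin: "\<And>b. b \<in> S \<Longrightarrow> \<phi> (a - x) \<le> \<phi> (b - x)"
    using continuous_attains_inf[OF cS _ ct] b0S by blast
  have "\<phi> (a - x) \<le> \<phi> (b - x)" if bK: "b \<in> K" for b
  proof (cases "b \<in> S")
    case True thus ?thesis by (rule amin)
  next
    case False
    hence "norm (b - x) > R0" using bK by (simp add: S_def dist_norm norm_minus_commute)
    hence "\<gamma> * norm (b - x) > d + 1" using g0 by (simp add: R0_def field_simps)
    moreover have "\<gamma> * norm (b - x) \<le> \<phi> (b - x)" by (rule nf_lower[OF nf cvx])
    moreover have "\<phi> (a - x) \<le> \<phi> (b0 - x)" by (rule amin[OF b0S])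
    ultimately show ?thesis using b0 by linarith
  qed
  hence "\<phi> (a - x) \<le> dist_fn \<phi> K x" by (intro dist_ge[OF Kne])
  moreover have "a \<in> K" using aS by (simp add: S_def)
  moreover have "dist_fn \<phi> K x \<le> \<phi> (a - x)" by (rule dist_le[OF \<open>a \<in> K\<close> nf])
  ultimately show ?thesis using nf_sym[OF nf, of x a] by (intro bexI[of _ a]) auto
qed

theorem lemma4p3:
  fixes \<phi> :: "'a::euclidean_space \<Rightarrow> real" and K :: "'a set"
  assumes "is_norm_fn \<phi>" and "uniformly_convex_norm \<phi>" and "C2_off_origin \<phi>"
    and "closed K" and "K \<noteq> {}"
  shows "(\<forall>x. x \<notin> K \<and> ptwise_twice_diff (dist_fn \<phi> K) x \<longrightarrow> rho_fn \<phi> K x > 1)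
         \<and> cut_locus \<phi> K \<subseteq> Sigma2 \<phi> K"
proof -
  note nf = assms(1) and cK = assms(4) and Kne = assms(5)
  obtain \<gamma> where g0: "\<gamma> > 0" and cvx: "convex_on UNIV (\<lambda>x. \<phi> x - \<gamma> * norm x)"
    using assms(2) unfolding uniformly_convex_norm_def by blast
  have part1: "rho_fn \<phi> K x > 1" if xK: "x \<notin> K" and ptw: "ptwise_twice_diff (dist_fn \<phi> K) x" for x
  proof -
    have "open (- K)" using cK by auto
    then obtain e where e0: "e > 0" and eb: "ball x e \<subseteq> - K" using xK by (meson ComplI open_contains_ball)
    have "\<gamma> * e \<le> dist_fn \<phi> K x"
    proof (rule dist_ge[OF Kne])
      fix b assume bK: "b \<in> K"
      hence "b \<notin> ball x e" using eb by auto
      hence "e \<le> norm (b - x)" by (simp add: dist_norm norm_minus_commute)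
      hence "\<gamma> * e \<le> \<gamma> * norm (b - x)" using g0 by simp
      also have "\<dots> \<le> \<phi> (b - x)" by (rule nf_lower[OF nf cvx])
      finally show "\<gamma> * e \<le> \<phi> (b - x)" .
    qed
    hence dpos: "dist_fn \<phi> K x > 0" using g0 e0 by (smt (verit) mult_pos_pos)
    have "\<exists>a. a \<in> xi_fn \<phi> K x"
      using nearest[OF nf g0 cvx cK Kne, of x] by (auto simp: xi_fn_def)
    hence aX: "(SOME a. a \<in> xi_fn \<phi> K x) \<in> xi_fn \<phi> K x" by (rule someI_ex)
    define a where "a = (SOME a. a \<in> xi_fn \<phi> K x)"
    have aK: "a \<in> K" and ad: "\<phi> (x - a) = dist_fn \<phi> K x" using aX by (auto simp: xi_fn_def a_def)
    obtain t where t0: "t > 0" and tt: "dist_fn \<phi> K (a + (1 + t) *\<^sub>R (x - a)) = (1 + t) * dist_fn \<phi> K x"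
      using core[OF nf g0 cvx Kne aK ad dpos ptw] by blast
    have "ereal (1 + t) \<in> ereal ` {s::real. dist_fn \<phi> K (a + s *\<^sub>R (x - a)) = s * dist_fn \<phi> K x}"
      using tt by auto
    hence "ereal (1 + t) \<le> rho_fn \<phi> K x"
      unfolding rho_fn_def Let_def a_def[symmetric] by (rule Sup_upper)
    moreover have "(1::ereal) < ereal (1 + t)" using t0 by simp
    ultimately show ?thesis by order
  qed
  have part2: "z \<in> Sigma2 \<phi> K" if zc: "z \<in> cut_locus \<phi> K" for z
  proof -
    obtain a \<eta> where z: "z = a + real_of_ereal (r_fn \<phi> K a \<eta>) *\<^sub>R \<eta>"
      and nb: "(a, \<eta>) \<in> normal_bundle \<phi> K" and rfin: "r_fn \<phi> K a \<eta> < \<infinity>"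
      using zc unfolding cut_locus_def by blast
    have aK: "a \<in> K" and ph1: "\<phi> \<eta> = 1" and ex: "\<exists>s>0. dist_fn \<phi> K (a + s *\<^sub>R \<eta>) = s"
      using nb unfolding normal_bundle_def by auto
    define S where "S = {s::real. s > 0 \<and> dist_fn \<phi> K (a + s *\<^sub>R \<eta>) = s}"
    have rdef: "r_fn \<phi> K a \<eta> = Sup (ereal ` S)" by (simp add: r_fn_def S_def)
    obtain s0 where s0S: "s0 \<in> S" using ex by (auto simp: S_def)
    have s0p: "s0 > 0" using s0S by (simp add: S_def)
    have "ereal s0 \<le> r_fn \<phi> K a \<eta>" unfolding rdef using s0S by (intro Sup_upper) auto
    then obtain R where rR: "r_fn \<phi> K a \<eta> = ereal R" using rfin
      by (cases "r_fn \<phi> K a \<eta>") auto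
    have Rre: "real_of_ereal (r_fn \<phi> K a \<eta>) = R" using rR by simp
    have sR: "s \<le> R" if "s \<in> S" for s
    proof -
      have "ereal s \<le> r_fn \<phi> K a \<eta>" unfolding rdef using that by (intro Sup_upper) auto
      thus ?thesis using rR by simp
    qed
    have R0: "R > 0" using sR[OF s0S] s0p by simp
    have phR: "\<phi> (c *\<^sub>R \<eta>) = c" if "c \<ge> 0" for c using nf_scale[OF nf that, of \<eta>] ph1 by simp
    have Dz: "dist_fn \<phi> K (a + R *\<^sub>R \<eta>) = R"
    proof (rule antisym)
      have "dist_fn \<phi> K (a + R *\<^sub>R \<eta>) \<le> \<phi> (a - (a + R *\<^sub>R \<eta>))" by (rule dist_le[OF aK nf])
      also have "\<dots> = \<phi> (R *\<^sub>R \<eta>)" using nf_neg[OF nf, of "R *\<^sub>R \<eta>"] by simp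
      finally show "dist_fn \<phi> K (a + R *\<^sub>R \<eta>) \<le> R" using phR R0 by simp
      show "R \<le> dist_fn \<phi> K (a + R *\<^sub>R \<eta>)"
      proof (rule ccontr)
        assume nR: "\<not> R \<le> dist_fn \<phi> K (a + R *\<^sub>R \<eta>)"
        define \<epsilon> where "\<epsilon> = R - dist_fn \<phi> K (a + R *\<^sub>R \<eta>)"
        have e0: "\<epsilon> > 0" using nR by (simp add: \<epsilon>_def)
        have "\<exists>s\<in>S. R - \<epsilon>/2 < s"
        proof (rule ccontr)
          assume "\<not> ?thesis"
          hence "\<forall>s\<in>S. s \<le> R - \<epsilon>/2" by auto
          hence "Sup (ereal ` S) \<le> ereal (R - \<epsilon>/2)" by (intro Sup_least) auto
          thus False using rR rdef e0 by simp
        qed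
        then obtain s where sS: "s \<in> S" and sgt: "R - \<epsilon>/2 < s" by blast
        have ds: "dist_fn \<phi> K (a + s *\<^sub>R \<eta>) = s" and sp: "s > 0" using sS by (auto simp: S_def)
        have sle: "s \<le> R" by (rule sR[OF sS])
        have "dist_fn \<phi> K (a + s *\<^sub>R \<eta>) \<le> dist_fn \<phi> K (a + R *\<^sub>R \<eta>) + \<phi> ((a + R *\<^sub>R \<eta>) - (a + s *\<^sub>R \<eta>))"
          by (rule dist_lip[OF nf Kne])
        also have "(a + R *\<^sub>R \<eta>) - (a + s *\<^sub>R \<eta>) = (R - s) *\<^sub>R \<eta>" by (simp add: algebra_simps)
        finally have "s \<le> dist_fn \<phi> K (a + R *\<^sub>R \<eta>) + (R - s)" using ds phR[of "R - s"] sle by simp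
        thus False using sgt unfolding \<epsilon>_def by (simp add: field_simps)
      qed
    qed
    have zK: "z \<notin> K"
    proof
      assume "z \<in> K"
      hence "dist_fn \<phi> K z \<le> \<phi> (z - z)" by (rule dist_le[OF _ nf])
      thus False using Dz z Rre R0 nf_zero[OF nf] by simp
    qed
    have "\<not> ptwise_twice_diff (dist_fn \<phi> K) z"
    proof
      assume ptw: "ptwise_twice_diff (dist_fn \<phi> K) z"
      have za: "z - a = R *\<^sub>R \<eta>" using z Rre by simp
      have ad: "\<phi> (z - a) = dist_fn \<phi> K z" using za phR R0 Dz z Rre by simp
      have dpos: "dist_fn \<phi> K z > 0" using Dz z Rre R0 by simp
      obtain t where t0: "t > 0" and tt: "dist_fn \<phi> K (a + (1 + t) *\<^sub>R (z - a)) = (1 + t) * dist_fn \<phi> K z"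
        using core[OF nf g0 cvx Kne aK ad dpos ptw] by blast
      have "dist_fn \<phi> K (a + ((1 + t) * R) *\<^sub>R \<eta>) = (1 + t) * R"
        using tt za Dz z Rre by simp
      hence "(1 + t) * R \<in> S" using t0 R0 by (simp add: S_def)
      hence "(1 + t) * R \<le> R" by (rule sR)
      moreover have "R * t > 0" using t0 R0 by simp
      ultimately show False by (simp add: algebra_simps)
    qed
    thus ?thesis using zK by (simp add: Sigma2_def)
  qed
  show ?thesis using part1 part2 by blast
qed

end
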